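(* For all integers $m,n \geq 3$, the toroidal grid $C_m \Box C_n$ is not diametrical, i.e. $\Gamma_b(C_m \Box C_n) \neq \mathrm{diam}(C_m \Box C_n)$.
   Context: $C_k$ is the cycle on $k$ vertices and $\Box$ the Cartesian product of graphs. Let $G=(V,E)$ be a finite connected graph with distance $d(u,v)$, eccentricity $e(v)=\max_w d(v,w)$ and diameter $\mathrm{diam}(G)=\max_v e(v)$. A broadcast is a function $f: V\to\{0,\dots,\mathrm{diam}(G)\}$ with $f(v)\le e(v)$; its cost is $\sum_v f(v)$; it is dominating if every $u$ has some $v$ with $f(v)\ge 1$ and $d(u,v)\le f(v)$; a dominating broadcast is minimal if decreasing $f(v)$ for any $v$ with $f(v)>0$ destroys domination. $\Gamma_b(G)$ is the maximum cost of a minimal dominating broadcast, and $G$ is called diametrical if $\Gamma_b(G)=\mathrm{diam}(G)$. *)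

theory Defs
  imports Main
begin

definition is_walk :: "'a set \<Rightarrow> ('a \<Rightarrow> 'a \<Rightarrow> bool) \<Rightarrow> 'a list \<Rightarrow> bool" where
  "is_walk V E xs \<longleftrightarrow> xs \<noteq> [] \<and> set xs \<subseteq> V \<and>
     (\<forall>i. Suc i < length xs \<longrightarrow> E (xs ! i) (xs ! Suc i))"

definition gdist :: "'a set \<Rightarrow> ('a \<Rightarrow> 'a \<Rightarrow> bool) \<Rightarrow> 'a \<Rightarrow> 'a \<Rightarrow> nat" where
  "gdist V E u v = (LEAST k. \<exists>xs. is_walk V E xs \<and> hd xs = u \<and> last xs = v \<and> length xs = Suc k)"

definition ecc :: "'a set \<Rightarrow> ('a \<Rightarrow> 'a \<Rightarrow> bool) \<Rightarrow> 'a \<Rightarrow> nat" where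
  "ecc V E v = Max ((\<lambda>w. gdist V E v w) ` V)"

definition diam :: "'a set \<Rightarrow> ('a \<Rightarrow> 'a \<Rightarrow> bool) \<Rightarrow> nat" where
  "diam V E = Max (ecc V E ` V)"

definition is_broadcast :: "'a set \<Rightarrow> ('a \<Rightarrow> 'a \<Rightarrow> bool) \<Rightarrow> ('a \<Rightarrow> nat) \<Rightarrow> bool" where
  "is_broadcast V E f \<longleftrightarrow> (\<forall>v\<in>V. f v \<le> ecc V E v) \<and> (\<forall>v. v \<notin> V \<longrightarrow> f v = 0)"

definition bcost :: "'a set \<Rightarrow> ('a \<Rightarrow> nat) \<Rightarrow> nat" where
  "bcost V f = (\<Sum>v\<in>V. f v)"

definition dominating :: "'a set \<Rightarrow> ('a \<Rightarrow> 'a \<Rightarrow> bool) \<Rightarrow> ('a \<Rightarrow> nat) \<Rightarrow> bool" where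
  "dominating V E f \<longleftrightarrow> (\<forall>u\<in>V. \<exists>v\<in>V. f v \<ge> 1 \<and> gdist V E u v \<le> f v)"

definition minimal_dominating :: "'a set \<Rightarrow> ('a \<Rightarrow> 'a \<Rightarrow> bool) \<Rightarrow> ('a \<Rightarrow> nat) \<Rightarrow> bool" where
  "minimal_dominating V E f \<longleftrightarrow> is_broadcast V E f \<and> dominating V E f \<and>
     (\<forall>v\<in>V. \<forall>k. f v > 0 \<longrightarrow> k < f v \<longrightarrow> \<not> dominating V E (f(v := k)))"

definition upper_broadcast_number :: "'a set \<Rightarrow> ('a \<Rightarrow> 'a \<Rightarrow> bool) \<Rightarrow> nat" where
  "upper_broadcast_number V E = Max {bcost V f | f. minimal_dominating V E f}"

definition cycleV :: "nat \<Rightarrow> nat set" where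
  "cycleV k = {0..<k}"

definition cycleE :: "nat \<Rightarrow> nat \<Rightarrow> nat \<Rightarrow> bool" where
  "cycleE k i j \<longleftrightarrow> i < k \<and> j < k \<and> (j = Suc i mod k \<or> i = Suc j mod k)"

definition prodV :: "'a set \<Rightarrow> 'b set \<Rightarrow> ('a \<times> 'b) set" where
  "prodV V1 V2 = V1 \<times> V2"

definition prodE :: "('a \<Rightarrow> 'a \<Rightarrow> bool) \<Rightarrow> ('b \<Rightarrow> 'b \<Rightarrow> bool) \<Rightarrow> ('a \<times> 'b) \<Rightarrow> ('a \<times> 'b) \<Rightarrow> bool" where
  "prodE E1 E2 x y \<longleftrightarrow> (fst x = fst y \<and> E2 (snd x) (snd y)) \<or> (snd x = snd y \<and> E1 (fst x) (fst y))"

end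

theory Submission
  imports Defs
begin


definition reach where
  "reach V E u v d \<longleftrightarrow> (\<exists>xs. is_walk V E xs \<and> hd xs = u \<and> last xs = v \<and> length xs = Suc d)"

lemma reach_refl: "u \<in> V \<Longrightarrow> reach V E u u 0"
  unfolding reach_def is_walk_def by (rule exI[of _ "[u]"]) auto

lemma reach_snoc:
  assumes "reach V E u v d" "E v w" "w \<in> V"
  shows "reach V E u w (Suc d)"
proof -
  obtain xs where xs: "is_walk V E xs" "hd xs = u" "last xs = v" "length xs = Suc d"
    using assms(1) unfolding reach_def by blast
  have "is_walk V E (xs @ [w])"
    unfolding is_walk_def
  proof (intro conjI allI impI)
    show "xs @ [w] \<noteq> []" by simp
    show "set (xs@[w]) \<subseteq> V" using xs(1) assms(3) unfolding is_walk_def by auto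
    fix i assume i: "Suc i < length (xs @ [w])"
    show "E ((xs @ [w]) ! i) ((xs @ [w]) ! Suc i)"
    proof (cases "Suc i < length xs")
      case True then show ?thesis using xs(1) unfolding is_walk_def by (simp add: nth_append)
    next
      case False
      then have si: "Suc i = length xs" using i by simp
      have "xs \<noteq> []" using xs(4) by auto
      then have "xs ! i = last xs" using si by (metis diff_Suc_1 last_conv_nth)
      then show ?thesis using si assms(2) xs(3) by (simp add: nth_append)
    qed
  qed
  moreover have "xs \<noteq> []" using xs(4) by auto
  ultimately show ?thesis unfolding reach_def using xs by (intro exI[of _ "xs@[w]"]) auto
qed

lemma reach_gdist:
  assumes "reach V E u v d"
  shows "gdist V E u v \<le> d" "reach V E u v (gdist V E u v)"
proof -
  show "gdist V E u v \<le> d" using assms unfolding gdist_def reach_def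
    by (auto intro: Least_le)
  have "\<exists>k. (\<exists>xs. is_walk V E xs \<and> hd xs = u \<and> last xs = v \<and> length xs = Suc k)"
    using assms unfolding reach_def by blast
  from LeastI_ex[OF this] show "reach V E u v (gdist V E u v)"
    unfolding gdist_def reach_def .
qed

lemma reach0: "reach V E u v 0 \<Longrightarrow> u = v"
  unfolding reach_def by (auto simp: length_Suc_conv)

lemma reach1: "reach V E u v 1 \<Longrightarrow> E u v"
  unfolding reach_def is_walk_def
  by (auto simp: length_Suc_conv)

lemma gdist_le1:
  assumes "reach V E u v d" "gdist V E u v \<le> 1"
  shows "u = v \<or> E u v"
proof -
  have r: "reach V E u v (gdist V E u v)" using reach_gdist(2)[OF assms(1)] .
  show ?thesis
  proof (cases "gdist V E u v = 0")
    case True then show ?thesis using r reach0 by metis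
  next
    case False then have "gdist V E u v = 1" using assms(2) by simp
    then show ?thesis using r reach1 by metis
  qed
qed

lemma cyc_iff:
  assumes "k \<ge> 3"
  shows "cycleE k i j \<longleftrightarrow> i < k \<and> j < k \<and> (j = i+1 \<or> i = j+1 \<or> (i = k-1 \<and> j = 0) \<or> (j = k-1 \<and> i = 0))"
proof -
  have s: "x < k \<Longrightarrow> Suc x mod k = (if Suc x = k then 0 else Suc x)" for x
    by auto
  show ?thesis unfolding cycleE_def
    using assms by (auto simp: s split: if_splits)
qed




locale torus =
  fixes m n :: nat
  assumes m3: "3 \<le> m" and n3: "3 \<le> n"
begin

abbreviation "TV \<equiv> prodV (cycleV m) (cycleV n)"
abbreviation "TE \<equiv> prodE (cycleE m) (cycleE n)"

lemma TV_iff[simp]: "(i,j) \<in> TV \<longleftrightarrow> i < m \<and> j < n"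
  by (simp add: prodV_def cycleV_def)

lemma TE_iff: "TE (i,j) (k,l) \<longleftrightarrow> (i = k \<and> cycleE n j l) \<or> (j = l \<and> cycleE m i k)"
  by (simp add: prodE_def)

lemma TE_iff2: "TE (i,j) (k,l) \<longleftrightarrow>
   (i = k \<and> j < n \<and> l < n \<and> (l = j+1 \<or> j = l+1 \<or> (j = n-1 \<and> l = 0) \<or> (l = n-1 \<and> j = 0))) \<or>
   (j = l \<and> i < m \<and> k < m \<and> (k = i+1 \<or> i = k+1 \<or> (i = m-1 \<and> k = 0) \<or> (k = m-1 \<and> i = 0)))"
  unfolding TE_iff cyc_iff[OF m3] cyc_iff[OF n3] by blast

lemma fwd1: "reach TV TE u (i,j) p \<Longrightarrow> i+d < m \<Longrightarrow> j < n \<Longrightarrow> reach TV TE u (i+d,j) (p+d)"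
proof (induction d)
  case 0 then show ?case by simp
next
  case (Suc d)
  then have "reach TV TE u (i+d,j) (p+d)" by simp
  moreover have "TE (i+d,j) (i+Suc d,j)" using Suc.prems by (simp add: TE_iff2)
  ultimately show ?case using Suc.prems reach_snoc[of TV TE u "(i+d,j)" "p+d" "(i+Suc d,j)"] by simp
qed

lemma bwd1: "reach TV TE u (i+d,j) p \<Longrightarrow> i+d < m \<Longrightarrow> j < n \<Longrightarrow> reach TV TE u (i,j) (p+d)"
proof (induction d arbitrary: i)
  case 0 then show ?case by simp
next
  case (Suc d)
  then have "reach TV TE u (i+1,j) (p+d)" using Suc.IH[of "i+1"] by simp
  moreover have "TE (i+1,j) (i,j)" using Suc.prems by (simp add: TE_iff2)
  ultimately show ?case using Suc.prems reach_snoc[of TV TE u "(i+1,j)" "p+d" "(i,j)"] by simp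
qed

lemma fwd2: "reach TV TE u (i,j) p \<Longrightarrow> j+d < n \<Longrightarrow> i < m \<Longrightarrow> reach TV TE u (i,j+d) (p+d)"
proof (induction d)
  case 0 then show ?case by simp
next
  case (Suc d)
  then have "reach TV TE u (i,j+d) (p+d)" by simp
  moreover have "TE (i,j+d) (i,j+Suc d)" using Suc.prems by (simp add: TE_iff2)
  ultimately show ?case using Suc.prems reach_snoc[of TV TE u "(i,j+d)" "p+d" "(i,j+Suc d)"] by simp
qed

lemma bwd2: "reach TV TE u (i,j+d) p \<Longrightarrow> j+d < n \<Longrightarrow> i < m \<Longrightarrow> reach TV TE u (i,j) (p+d)"
proof (induction d arbitrary: j)
  case 0 then show ?case by simp
next
  case (Suc d)
  then have "reach TV TE u (i,j+1) (p+d)" using Suc.IH[of "j+1"] by simp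
  moreover have "TE (i,j+1) (i,j)" using Suc.prems by (simp add: TE_iff2)
  ultimately show ?case using Suc.prems reach_snoc[of TV TE u "(i,j+1)" "p+d" "(i,j)"] by simp
qed

lemma wrap1a: "reach TV TE u (0,j) p \<Longrightarrow> j < n \<Longrightarrow> reach TV TE u (m-1,j) (p+1)"
  using reach_snoc[of TV TE u "(0,j)" p "(m-1,j)"] m3 by (simp add: TE_iff2)
lemma wrap1b: "reach TV TE u (m-1,j) p \<Longrightarrow> j < n \<Longrightarrow> reach TV TE u (0,j) (p+1)"
  using reach_snoc[of TV TE u "(m-1,j)" p "(0,j)"] m3 by (simp add: TE_iff2)
lemma wrap2a: "reach TV TE u (i,0) p \<Longrightarrow> i < m \<Longrightarrow> reach TV TE u (i,n-1) (p+1)"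
  using reach_snoc[of TV TE u "(i,0)" p "(i,n-1)"] n3 by (simp add: TE_iff2)
lemma wrap2b: "reach TV TE u (i,n-1) p \<Longrightarrow> i < m \<Longrightarrow> reach TV TE u (i,0) (p+1)"
  using reach_snoc[of TV TE u "(i,n-1)" p "(i,0)"] n3 by (simp add: TE_iff2)

lemma mdiv: "m div 2 + m div 2 \<le> m" "m \<le> m div 2 + m div 2 + 1"
  "n div 2 + n div 2 \<le> n" "n \<le> n div 2 + n div 2 + 1" by linarith+

lemma route1:
  assumes r: "reach TV TE u (i,j) p" and i: "i < m" and k: "k < m" and j: "j < n"
  shows "\<exists>d \<le> m div 2. reach TV TE u (k,j) (p+d)"
proof (cases "i \<le> k")
  case True
  show ?thesis
  proof (cases "k - i \<le> m div 2")
    case True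
    have "reach TV TE u (i+(k-i),j) (p+(k-i))" using fwd1[OF r, of "k-i"] k j \<open>i \<le> k\<close> by simp
    then show ?thesis using True \<open>i \<le> k\<close> by (intro exI[of _ "k-i"]) simp
  next
    case False
    have "reach TV TE u (0,j) (p+i)" using bwd1[of u 0 i j p] r i j by simp
    then have "reach TV TE u (m-1,j) (p+i+1)" using wrap1a j by blast
    then have h: "reach TV TE u (k,j) (p+i+1+(m-1-k))" using bwd1[of u k "m-1-k" j "p+i+1"] k j by simp
    have eq: "p+i+1+(m-1-k) = p + (i+m-k)" and le: "i+m-k \<le> m div 2" using False True k mdiv by linarith+
    show ?thesis using h le unfolding eq by blast
  qed
next
  case False
  show ?thesis
  proof (cases "i - k \<le> m div 2")
    case True
    have "reach TV TE u (k,j) (p+(i-k))" using bwd1[of u k "i-k" j p] r i j False by simp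
    then show ?thesis using True by (intro exI[of _ "i-k"]) simp
  next
    case F2: False
    have "reach TV TE u (i+(m-1-i),j) (p+(m-1-i))" using fwd1[OF r, of "m-1-i"] i j by simp
    then have "reach TV TE u (m-1,j) (p+(m-1-i))" using i by simp
    then have "reach TV TE u (0,j) (p+(m-1-i)+1)" using wrap1b j by blast
    then have h: "reach TV TE u (k,j) (p+(m-1-i)+1+k)" using fwd1[of u 0 j "p+(m-1-i)+1" k] k j by simp
    have eq: "p+(m-1-i)+1+k = p + (m+k-i)" and le: "m+k-i \<le> m div 2" using False F2 i mdiv by linarith+
    show ?thesis using h le unfolding eq by blast
  qed
qed

lemma route2:
  assumes r: "reach TV TE u (i,j) p" and i: "j < n" and k: "l < n" and j: "i < m"
  shows "\<exists>d \<le> n div 2. reach TV TE u (i,l) (p+d)"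
proof (cases "j \<le> l")
  case True
  show ?thesis
  proof (cases "l - j \<le> n div 2")
    case True
    have "reach TV TE u (i,j+(l-j)) (p+(l-j))" using fwd2[OF r, of "l-j"] k j \<open>j \<le> l\<close> by simp
    then show ?thesis using True \<open>j \<le> l\<close> by (intro exI[of _ "l-j"]) simp
  next
    case False
    have "reach TV TE u (i,0) (p+j)" using bwd2[of u i 0 j p] r i j by simp
    then have "reach TV TE u (i,n-1) (p+j+1)" using wrap2a j by blast
    then have h: "reach TV TE u (i,l) (p+j+1+(n-1-l))" using bwd2[of u i l "n-1-l" "p+j+1"] k j by simp
    have eq: "p+j+1+(n-1-l) = p + (j+n-l)" and le: "j+n-l \<le> n div 2" using False True k mdiv by linarith+
    show ?thesis using h le unfolding eq by blast
  qed
next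
  case False
  show ?thesis
  proof (cases "j - l \<le> n div 2")
    case True
    have "reach TV TE u (i,l) (p+(j-l))" using bwd2[of u i l "j-l" p] r i j False by simp
    then show ?thesis using True by (intro exI[of _ "j-l"]) simp
  next
    case F2: False
    have "reach TV TE u (i,j+(n-1-j)) (p+(n-1-j))" using fwd2[OF r, of "n-1-j"] i j by simp
    then have "reach TV TE u (i,n-1) (p+(n-1-j))" using i by simp
    then have "reach TV TE u (i,0) (p+(n-1-j)+1)" using wrap2b j by blast
    then have h: "reach TV TE u (i,l) (p+(n-1-j)+1+l)" using fwd2[of u i 0 "p+(n-1-j)+1" l] k j by simp
    have eq: "p+(n-1-j)+1+l = p + (n+l-j)" and le: "n+l-j \<le> n div 2" using False F2 i mdiv by linarith+
    show ?thesis using h le unfolding eq by blast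
  qed
qed

lemma reach_all:
  assumes "u \<in> TV" "v \<in> TV"
  shows "\<exists>d \<le> m div 2 + n div 2. reach TV TE u v d"
proof -
  obtain i j where u: "u = (i,j)" by (cases u)
  obtain k l where v: "v = (k,l)" by (cases v)
  have ij: "i < m" "j < n" "k < m" "l < n" using assms unfolding u v by simp_all
  have "reach TV TE u (i,j) 0" using reach_refl[OF assms(1), of TE] u by simp
  from route1[OF this ij(1) ij(3) ij(2)] obtain d1 where d1: "d1 \<le> m div 2" "reach TV TE u (k,j) (0+d1)" by blast
  from route2[OF d1(2) ij(2) ij(4) ij(3)] obtain d2 where d2: "d2 \<le> n div 2" "reach TV TE u (k,l) (0+d1+d2)" by blast
  have "d1 + d2 \<le> m div 2 + n div 2" using d1(1) d2(1) by linarith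
  moreover have "reach TV TE u v (d1+d2)" using d2(2) v by simp
  ultimately show ?thesis by (intro exI[of _ "d1+d2"] conjI)
qed

lemma finTV: "finite TV" unfolding prodV_def cycleV_def by (intro finite_cartesian_product finite_atLeastLessThan)

lemma gdist_bound: "u \<in> TV \<Longrightarrow> v \<in> TV \<Longrightarrow> gdist TV TE u v \<le> m div 2 + n div 2"
proof -
  assume "u \<in> TV" "v \<in> TV"
  then obtain d where "d \<le> m div 2 + n div 2" "reach TV TE u v d" using reach_all by blast
  then show ?thesis using reach_gdist(1)[of TV TE u v d] by linarith
qed

lemma ecc_bound: "u \<in> TV \<Longrightarrow> ecc TV TE u \<le> m div 2 + n div 2"
proof -
  assume u: "u \<in> TV"
  have "finite ((\<lambda>w. gdist TV TE u w) ` TV)" using finTV by (rule finite_imageI)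
  moreover have "(\<lambda>w. gdist TV TE u w) ` TV \<noteq> {}" using u by blast
  ultimately show ?thesis unfolding ecc_def using gdist_bound[OF u] by (simp add: Max_le_iff)
qed

lemma diam_bound: "diam TV TE \<le> m div 2 + n div 2"
proof -
  have "(0,0) \<in> TV" using m3 n3 by simp
  then have "TV \<noteq> {}" by blast
  moreover have "finite (ecc TV TE ` TV)" using finTV by (rule finite_imageI)
  ultimately show ?thesis unfolding diam_def using ecc_bound by (simp add: Max_le_iff)
qed

end



lemma indep_arith:
  fixes i j k l a b m n :: nat
  assumes A: "(i < 2*a \<and> j < 2*b \<and> even (i+j)) \<or> (m = 2*a+1 \<and> n = 2*b+1 \<and> i = m-1 \<and> j = n-1)"
     and B: "(k < 2*a \<and> l < 2*b \<and> even (k+l)) \<or> (m = 2*a+1 \<and> n = 2*b+1 \<and> k = m-1 \<and> l = n-1)"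
  and T: "(i = k \<and> j < n \<and> l < n \<and> (l = j+1 \<or> j = l+1 \<or> (j = n-1 \<and> l = 0) \<or> (l = n-1 \<and> j = 0))) \<or>
   (j = l \<and> i < m \<and> k < m \<and> (k = i+1 \<or> i = k+1 \<or> (i = m-1 \<and> k = 0) \<or> (k = m-1 \<and> i = 0)))"
  and mn: "m = 2*a \<or> m = 2*a+1" "n = 2*b \<or> n = 2*b+1" "1 \<le> a" "1 \<le> b"
  shows False
  using A B T mn
  by (elim disjE conjE) simp_all

context torus begin

definition "Bs = {(i,j). i < 2*(m div 2) \<and> j < 2*(n div 2) \<and> even (i+j)}"
definition "S = (if odd m \<and> odd n then insert (m-1,n-1) Bs else Bs)"

lemma mn_cases: "m = 2*(m div 2) \<or> m = 2*(m div 2) + 1" "n = 2*(n div 2) \<or> n = 2*(n div 2) + 1"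
  "odd m \<longleftrightarrow> m = 2*(m div 2) + 1" "odd n \<longleftrightarrow> n = 2*(n div 2) + 1"
  "1 \<le> m div 2" "1 \<le> n div 2"
  using m3 n3 by presburger+

lemma mem_S: "(i,j) \<in> S \<longleftrightarrow> (i < 2*(m div 2) \<and> j < 2*(n div 2) \<and> even (i+j)) \<or>
    (m = 2*(m div 2)+1 \<and> n = 2*(n div 2)+1 \<and> i = m-1 \<and> j = n-1)"
  unfolding S_def Bs_def mn_cases(3,4) by auto

lemma S_sub: "x \<in> S \<Longrightarrow> x \<in> TV"
proof -
  assume "x \<in> S"
  moreover obtain i j where x: "x = (i,j)" by (cases x)
  ultimately have "(i,j) \<in> S" by simp
  then have "i < m \<and> j < n" unfolding mem_S using mn_cases(1,2) by auto
  then show ?thesis using x by simp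
qed

lemma S_indep: "x \<in> S \<Longrightarrow> y \<in> S \<Longrightarrow> \<not> TE x y"
proof -
  assume xy: "x \<in> S" "y \<in> S"
  obtain i j where x: "x = (i,j)" by (cases x)
  obtain k l where y: "y = (k,l)" by (cases y)
  have "(i,j) \<in> S" "(k,l) \<in> S" using xy x y by simp_all
  then have "\<not> TE (i,j) (k,l)" unfolding mem_S TE_iff2 using indep_arith[OF _ _ _ mn_cases(1,2,5,6)]
    by blast
  then show ?thesis using x y by simp
qed

lemma S_dom:
  assumes ij: "i < m" "j < n"
  shows "\<exists>w\<in>S. (i,j) = w \<or> TE (i,j) w"
proof -
  define a where "a = m div 2"
  define b where "b = n div 2"
  have mn: "m = 2*a \<or> m = 2*a+1" "n = 2*b \<or> n = 2*b+1" "1 \<le> a" "1 \<le> b"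
    using mn_cases unfolding a_def b_def by auto
  have memS: "(x,y) \<in> S \<longleftrightarrow> (x < 2*a \<and> y < 2*b \<and> even (x+y)) \<or> (m = 2*a+1 \<and> n = 2*b+1 \<and> x = m-1 \<and> y = n-1)" for x y
    unfolding mem_S a_def b_def ..
  show ?thesis
  proof (cases "i < 2*a")
    case iA: True
    show ?thesis
    proof (cases "j < 2*b")
      case jB: True
      show ?thesis
      proof (cases "even (i+j)")
        case True then show ?thesis using iA jB memS by blast
      next
        case odd: False
        show ?thesis
        proof (cases "i+1 < 2*a")
          case True
          moreover have "i+1 < m" using True mn by linarith
          ultimately have "(i+1,j) \<in> S" "TE (i,j) (i+1,j)" using memS jB odd mn ij by (simp_all add: TE_iff2)
          then show ?thesis by blast
        next
          case False
          then have ia: "i = 2*a - 1" using iA by linarith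
          define i' where "i' = i - 1"
          have i': "i = Suc i'" using ia mn unfolding i'_def by linarith
          have "even i'" using ia i' mn by presburger
          then have "(i',j) \<in> S" "TE (i,j) (i',j)" using memS jB odd mn ij iA i' by (simp_all add: TE_iff2)
          then show ?thesis by blast
        qed
      qed
    next
      case jB: False
      then have n: "n = 2*b+1" "j = n-1" using mn ij by auto
      show ?thesis
      proof (cases "even i")
        case True
        then have "(i,0) \<in> S" using memS n mn ij iA by simp
        moreover have "TE (i,j) (i,0)" using ij n(2) by (simp add: TE_iff2)
        ultimately show ?thesis by blast
      next
        case False
        define j' where "j' = j - 1"
        have j': "j = Suc j'" "j' = 2*b - 1" using n mn unfolding j'_def by linarith+
        have "j' < 2*b" "odd j'" using j' mn by presburger+
        then have "(i,j') \<in> S" using memS n mn ij iA j' False by simp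
        moreover have "TE (i,j) (i,j')" using ij j'(1) by (simp add: TE_iff2)
        ultimately show ?thesis by blast
      qed
    qed
  next
    case iA: False
    then have m: "m = 2*a+1" "i = m-1" using mn ij by auto
    show ?thesis
    proof (cases "j < 2*b")
      case jB: True
      show ?thesis
      proof (cases "even j")
        case True
        then have "(0,j) \<in> S" using memS m mn ij jB by simp
        moreover have "TE (i,j) (0,j)" using ij m(2) by (simp add: TE_iff2)
        ultimately show ?thesis by blast
      next
        case False
        define i' where "i' = i - 1"
        have i': "i = Suc i'" "i' = 2*a - 1" using m mn unfolding i'_def by linarith+
        have "i' < 2*a" "odd i'" using i' mn by presburger+
        then have "(i',j) \<in> S" using memS m mn ij jB i' False by simp
        moreover have "TE (i,j) (i',j)" using ij i'(1) by (simp add: TE_iff2)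
        ultimately show ?thesis by blast
      qed
    next
      case jB: False
      then have n: "n = 2*b+1" "j = n-1" using mn ij by auto
      then have "(i,j) \<in> S" using memS m by simp
      then show ?thesis by blast
    qed
  qed
qed

end



context torus begin

lemma Bs_img: "Bs = (\<lambda>(k,j). (2*k + j mod 2, j)) ` ({..<m div 2} \<times> {..<2*(n div 2)})"
proof
  show "Bs \<subseteq> (\<lambda>(k,j). (2*k + j mod 2, j)) ` ({..<m div 2} \<times> {..<2*(n div 2)})"
  proof
    fix x assume "x \<in> Bs"
    then obtain i j where x: "x = (i,j)" "i < 2*(m div 2)" "j < 2*(n div 2)" "even (i+j)"
      unfolding Bs_def by blast
    have "i = 2*(i div 2) + j mod 2" "i div 2 < m div 2" using x(2,4) by presburger+
    then show "x \<in> (\<lambda>(k,j). (2*k + j mod 2, j)) ` ({..<m div 2} \<times> {..<2*(n div 2)})"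
      using x by (intro image_eqI[of _ _ "(i div 2, j)"]) auto
  qed
next
  show "(\<lambda>(k,j). (2*k + j mod 2, j)) ` ({..<m div 2} \<times> {..<2*(n div 2)}) \<subseteq> Bs"
  proof
    fix x assume "x \<in> (\<lambda>(k,j). (2*k + j mod 2, j)) ` ({..<m div 2} \<times> {..<2*(n div 2)})"
    then obtain k j where x: "x = (2*k + j mod 2, j)" "k < m div 2" "j < 2*(n div 2)" by force
    have "2*k + j mod 2 < 2*(m div 2)" "even (2*k + j mod 2 + j)" using x(2) by presburger+
    then show "x \<in> Bs" unfolding Bs_def using x by simp
  qed
qed

lemma card_Bs: "card Bs = (m div 2) * (2*(n div 2))"
proof -
  have "inj_on (\<lambda>(k,j). (2*k + j mod 2, j)) ({..<m div 2} \<times> {..<2*(n div 2)})"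
    by (auto simp: inj_on_def)
  then show ?thesis unfolding Bs_img by (simp add: card_image card_cartesian_product)
qed

lemma finite_Bs: "finite Bs" unfolding Bs_img by simp

lemma card_S: "m div 2 + n div 2 < card S"
proof -
  define a where "a = m div 2"
  define b where "b = n div 2"
  have ab: "1 \<le> a" "1 \<le> b" using mn_cases unfolding a_def b_def by auto
  have cB: "card Bs = a * (2*b)" using card_Bs unfolding a_def b_def .
  have p1: "a \<le> a*b" "b \<le> a*b" "a*(2*b) = 2*(a*b)" using ab by simp_all
  show ?thesis
  proof (cases "odd m \<and> odd n")
    case True
    have "(m-1,n-1) \<notin> Bs" unfolding Bs_def using mn_cases True by auto
    then have "card S = card Bs + 1" unfolding S_def using True finite_Bs by simp
    then show ?thesis using cB p1 unfolding a_def[symmetric] b_def[symmetric] by linarith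
  next
    case False
    then have "S = Bs" unfolding S_def by (simp only: if_False)
    then have cS: "card S = a*(2*b)" using cB by simp
    have "2 \<le> a \<or> 2 \<le> b"
    proof (rule ccontr)
      assume "\<not> (2 \<le> a \<or> 2 \<le> b)"
      then have "a = 1" "b = 1" using ab by auto
      then have "m = 3" "n = 3" using m3 n3 mn_cases(1,2) unfolding a_def b_def by auto
      then show False using False by simp
    qed
    moreover have "2 \<le> a \<Longrightarrow> 2*b \<le> a*b" "2 \<le> b \<Longrightarrow> 2*a \<le> a*b" by simp_all
    ultimately show ?thesis using cS p1 unfolding a_def[symmetric] b_def[symmetric] by linarith
  qed
qed

definition "F = (\<lambda>x. if x \<in> S then 1 else (0::nat))"

lemma ecc_ge1: "v \<in> TV \<Longrightarrow> 1 \<le> ecc TV TE v"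
proof -
  assume v: "v \<in> TV"
  obtain i j where vij: "v = (i,j)" by (cases v)
  define w where "w = (if i = 0 then (1::nat,j) else (0,j))"
  have w: "w \<in> TV" "w \<noteq> v" using v m3 unfolding w_def vij by auto
  obtain d where "reach TV TE v w d" using reach_all[OF v w(1)] by blast
  then have r: "reach TV TE v w (gdist TV TE v w)" by (rule reach_gdist(2))
  have "gdist TV TE v w \<noteq> 0"
  proof
    assume "gdist TV TE v w = 0"
    then show False using r reach0 w(2) by metis
  qed
  moreover have "gdist TV TE v w \<le> ecc TV TE v" unfolding ecc_def
    using finTV w(1) by (intro Max_ge) auto
  ultimately show ?thesis by linarith
qed

lemma md: "minimal_dominating TV TE F"
  unfolding minimal_dominating_def
proof (intro conjI)
  show "is_broadcast TV TE F"
    unfolding is_broadcast_def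
  proof (intro conjI ballI allI impI)
    fix v assume "v \<in> TV"
    then show "F v \<le> ecc TV TE v" using ecc_ge1 unfolding F_def by simp
  next
    fix v assume "v \<notin> TV"
    then have "v \<notin> S" using S_sub by blast
    then show "F v = 0" unfolding F_def by simp
  qed
  show "dominating TV TE F"
    unfolding dominating_def
  proof
    fix u assume u: "u \<in> TV"
    obtain i j where uij: "u = (i,j)" by (cases u)
    have ij: "i < m" "j < n" using u uij by simp_all
    obtain w where w: "w \<in> S" "(i,j) = w \<or> TE (i,j) w" using S_dom[OF ij] by blast
    have wV: "w \<in> TV" using S_sub w(1) .
    have "reach TV TE u w 1 \<or> reach TV TE u w 0"
    proof (cases "u = w")
      case True then show ?thesis using reach_refl[OF wV] by simp
    next
      case False then have "TE u w" using w(2) uij by simp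
      then have "reach TV TE u w (Suc 0)" using reach_snoc[OF reach_refl[OF u]] wV by blast
      then show ?thesis by simp
    qed
    then have "gdist TV TE u w \<le> 1" using reach_gdist(1) by fastforce
    moreover have "F w = 1" using w(1) unfolding F_def by simp
    ultimately show "\<exists>v\<in>TV. 1 \<le> F v \<and> gdist TV TE u v \<le> F v" using wV by (intro bexI[of _ w]) simp_all
  qed
  show "\<forall>v\<in>TV. \<forall>k. 0 < F v \<longrightarrow> k < F v \<longrightarrow> \<not> dominating TV TE (F(v := k))"
  proof (intro ballI allI impI)
    fix v k assume v: "v \<in> TV" and pos: "0 < F v" and k: "k < F v"
    have vS: "v \<in> S" using pos unfolding F_def by (simp split: if_splits)
    have k0: "k = 0" using k unfolding F_def by (simp split: if_splits)
    show "\<not> dominating TV TE (F(v := k))"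
    proof
      assume "dominating TV TE (F(v := k))"
      then obtain w where w: "w \<in> TV" "1 \<le> (F(v := k)) w" "gdist TV TE v w \<le> (F(v := k)) w"
        using v unfolding dominating_def by blast
      have wv: "w \<noteq> v" using w(2) k0 by auto
      then have wS: "w \<in> S" using w(2) unfolding F_def by (simp split: if_splits)
      have "gdist TV TE v w \<le> 1" using w(3) wv wS unfolding F_def by simp
      moreover obtain d where "reach TV TE v w d" using reach_all[OF v w(1)] by blast
      ultimately have "v = w \<or> TE v w" using gdist_le1 by metis
      then show False using wv S_indep vS wS by blast
    qed
  qed
qed

lemma bcost_F: "bcost TV F = card S"
proof -
  have "bcost TV F = (\<Sum>x\<in>TV. if x \<in> S then 1 else 0)" unfolding bcost_def F_def by simp
  also have "\<dots> = card (TV \<inter> S)" using finTV by (simp add: sum.If_cases)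
  also have "TV \<inter> S = S" using S_sub by blast
  finally show ?thesis .
qed

lemma ubn_ge: "card S \<le> upper_broadcast_number TV TE"
proof -
  let ?A = "{bcost TV f | f. minimal_dominating TV TE f}"
  have "?A \<subseteq> {..card TV * (m div 2 + n div 2)}"
  proof
    fix c assume "c \<in> ?A"
    then obtain f where c: "c = bcost TV f" and f: "minimal_dominating TV TE f" by blast
    have "\<forall>v\<in>TV. f v \<le> m div 2 + n div 2"
      using f ecc_bound unfolding minimal_dominating_def is_broadcast_def by (meson le_trans)
    then have "bcost TV f \<le> (\<Sum>v\<in>TV. m div 2 + n div 2)" unfolding bcost_def by (intro sum_mono) blast
    then show "c \<in> {..card TV * (m div 2 + n div 2)}" using c by simp
  qed
  then have "finite ?A" by (rule finite_subset) simp
  moreover have "bcost TV F \<in> ?A" using md by blast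
  ultimately show ?thesis unfolding upper_broadcast_number_def bcost_F[symmetric] by (rule Max_ge)
qed

end

theorem mainTheorem13:
  fixes m n :: nat
  assumes "m \<ge> 3" and "n \<ge> 3"
  shows "upper_broadcast_number (prodV (cycleV m) (cycleV n)) (prodE (cycleE m) (cycleE n))
         \<noteq> diam (prodV (cycleV m) (cycleV n)) (prodE (cycleE m) (cycleE n))"
proof -
  interpret torus m n using assms by unfold_locales
  show ?thesis using diam_bound card_S ubn_ge by linarith
qed


end
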